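(* In the setting described in the context, let $\gamma_1,\ldots,\gamma_K>0$ and consider $$\mathbf{P3}:\quad \min_{\mathbf{p}_1,\ldots,\mathbf{p}_K\in\mathbb{C}^{M_t}}\sum_{k=1}^K\mathbf{p}_k^H\mathbf{p}_k\quad\text{s.t.}\quad \mathcal{C}_k\le 0,\ k=1,\ldots,K,$$ where $\mathcal{C}_k=1+\frac{1}{\sigma_n^2}\sum_{i\neq k}\mathbf{p}_i^H\mathbf{R}_k\mathbf{p}_i-\frac{1}{\sigma_n^2\gamma_k}\mathbf{p}_k^H\mathbf{R}_k\mathbf{p}_k$. Let $(\mathbf{p}_1,\ldots,\mathbf{p}_K)$ be an optimal solution of $\mathbf{P3}$ with optimal Lagrange multipliers $\mu_1,\ldots,\mu_K\ge0$, i.e. together they satisfy the KKT conditions $\mathbf{p}_k+\sum_{i\neq k}\frac{\mu_i}{\sigma_n^2}\mathbf{R}_i\mathbf{p}_k-\frac{\mu_k}{\sigma_n^2\gamma_k}\mathbf{R}_k\mathbf{p}_k=\mathbf{0}$ and $\mu_k\mathcal{C}_k=0$ for all $k$. Write $\mathbf{p}_k=\sqrt{\rho_k}\,\underline{\mathbf{p}}_k$ with $\rho_k\ge0$ and $\underline{\mathbf{p}}_k^H\underline{\mathbf{p}}_k=1$, and set $\mathbf{S}_k=\mu_k\mathbf{R}_k$ and $\mathbf{N}_k=\sigma_n^2\mathbf{I}+\sum_{i\neq k}\mu_i\mathbf{R}_i$. Then for each $k$, $\underline{\mathbf{p}}_k$ is a generalized eigenvector of the matrix pair $(\mathbf{S}_k,\mathbf{N}_k)$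 associated with its maximum generalized eigenvalue, and $\gamma_k$ equals this maximum generalized eigenvalue.
   Context: A base station with $M_t$ antennas serves $K$ single-antenna users; $\sigma_n^2>0$ is the noise variance. For each user $k$, $\mathbf{R}_k=\mathbb{E}\{\mathbf{h}_k\mathbf{h}_k^H\}=\beta_k^2\bar{\mathbf{h}}_k\bar{\mathbf{h}}_k^H+(1-\beta_k^2)\mathbf{V}\boldsymbol{\Lambda}_k\mathbf{V}^H\in\mathbb{C}^{M_t\times M_t}$, where $\bar{\mathbf{h}}_k\in\mathbb{C}^{M_t}$, $\beta_k\in[0,1]$, $\mathbf{V}\in\mathbb{C}^{M_t\times NM_t}$ is a fixed matrix (a Kronecker product of oversampled DFT matrices), and $\boldsymbol{\Lambda}_k$ is an $NM_t\times NM_t$ diagonal matrix with nonnegative diagonal entries; this is the covariance of the channel $\mathbf{h}_k=\beta_k\bar{\mathbf{h}}_k+\sqrt{1-\beta_k^2}\mathbf{V}(\mathbf{m}_k\odot\mathbf{w}_k)$ with $\mathbf{w}_k$ i.i.d. $\mathcal{CN}(0,1)$ entries and $\boldsymbol{\Lambda}_k=\mathrm{diag}(\mathbf{m}_k\odot\mathbf{m}_k)$. A generalized eigenvalue $\lambda$ of a pair $(\mathbf{S},\mathbf{N})$ with eigenvector $\mathbf{x}\neq\mathbf{0}$ satisfies $\mathbf{S}\mathbf{x}=\lambda\mathbf{N}\mathbf{x}$. *)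

theory Defs
  imports "Jordan_Normal_Form.Matrix" "Jordan_Normal_Form.Conjugate"
begin

definition hform :: "nat \<Rightarrow> complex mat \<Rightarrow> complex vec \<Rightarrow> complex" where
  "hform n A x = (\<Sum>a<n. \<Sum>b<n. cnj (x $ a) * A $$ (a, b) * x $ b)"

definition vnorm2 :: "nat \<Rightarrow> complex vec \<Rightarrow> complex" where
  "vnorm2 n x = (\<Sum>a<n. cnj (x $ a) * x $ a)"

(* Channel covariance R = beta^2 hbar hbar^H + (1 - beta^2) V Lambda V^H,
   with V an Mt x (NMt) matrix, Lambda = diag(lam 0, ..., lam (NMt-1)) *)
definition covR :: "nat \<Rightarrow> nat \<Rightarrow> real \<Rightarrow> complex vec \<Rightarrow> complex mat \<Rightarrow> (nat \<Rightarrow> real) \<Rightarrow> complex mat" where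
  "covR Mt L beta hbar V lam =
     mat Mt Mt (\<lambda>(a, b). complex_of_real (beta\<^sup>2) * (hbar $ a * cnj (hbar $ b))
       + complex_of_real (1 - beta\<^sup>2) *
         (\<Sum>j<L. V $$ (a, j) * complex_of_real (lam j) * cnj (V $$ (b, j))))"

definition gen_eigenvalue :: "nat \<Rightarrow> complex mat \<Rightarrow> complex mat \<Rightarrow> complex \<Rightarrow> bool" where
  "gen_eigenvalue n S N lambda \<longleftrightarrow>
     (\<exists>x \<in> carrier_vec n. x \<noteq> 0\<^sub>v n \<and> S *\<^sub>v x = lambda \<cdot>\<^sub>v (N *\<^sub>v x))"

(* lambda is the maximum generalized eigenvalue of (S, N) (ordering of HOL-Library.Complex_Order) *)
definition max_gen_eigenvalue :: "nat \<Rightarrow> complex mat \<Rightarrow> complex mat \<Rightarrow> complex \<Rightarrow> bool" where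
  "max_gen_eigenvalue n S N lambda \<longleftrightarrow>
     gen_eigenvalue n S N lambda \<and> (\<forall>l. gen_eigenvalue n S N l \<longrightarrow> l \<le> lambda)"

definition max_gen_eigenvector :: "nat \<Rightarrow> complex mat \<Rightarrow> complex mat \<Rightarrow> complex vec \<Rightarrow> bool" where
  "max_gen_eigenvector n S N x \<longleftrightarrow>
     (\<exists>lambda. max_gen_eigenvalue n S N lambda \<and> x \<in> carrier_vec n \<and> x \<noteq> 0\<^sub>v n
               \<and> S *\<^sub>v x = lambda \<cdot>\<^sub>v (N *\<^sub>v x))"

definition Ck :: "nat \<Rightarrow> nat \<Rightarrow> real \<Rightarrow> (nat \<Rightarrow> complex mat) \<Rightarrow> (nat \<Rightarrow> real)
                  \<Rightarrow> (nat \<Rightarrow> complex vec) \<Rightarrow> nat \<Rightarrow> real" where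
  "Ck Mt K sigma2 R gamma p k =
     1 + (1 / sigma2) * Re (\<Sum>i\<in>{0..<K} - {k}. hform Mt (R k) (p i))
       - (1 / (sigma2 * gamma k)) * Re (hform Mt (R k) (p k))"

definition feasibleP3 :: "nat \<Rightarrow> nat \<Rightarrow> real \<Rightarrow> (nat \<Rightarrow> complex mat) \<Rightarrow> (nat \<Rightarrow> real)
                  \<Rightarrow> (nat \<Rightarrow> complex vec) \<Rightarrow> bool" where
  "feasibleP3 Mt K sigma2 R gamma p \<longleftrightarrow>
     (\<forall>k<K. p k \<in> carrier_vec Mt \<and> Ck Mt K sigma2 R gamma p k \<le> 0)"

definition objP3 :: "nat \<Rightarrow> nat \<Rightarrow> (nat \<Rightarrow> complex vec) \<Rightarrow> real" where
  "objP3 Mt K p = (\<Sum>k<K. Re (vnorm2 Mt (p k)))"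

definition optimalP3 :: "nat \<Rightarrow> nat \<Rightarrow> real \<Rightarrow> (nat \<Rightarrow> complex mat) \<Rightarrow> (nat \<Rightarrow> real)
                  \<Rightarrow> (nat \<Rightarrow> complex vec) \<Rightarrow> bool" where
  "optimalP3 Mt K sigma2 R gamma p \<longleftrightarrow>
     feasibleP3 Mt K sigma2 R gamma p \<and>
     (\<forall>q. feasibleP3 Mt K sigma2 R gamma q \<longrightarrow> objP3 Mt K p \<le> objP3 Mt K q)"

end

theory Submission
  imports Defs
begin


lemma zmat_solve:
  fixes M :: "nat \<Rightarrow> nat \<Rightarrow> real" and q :: "nat \<Rightarrow> real"
  assumes "\<forall>i<n. q i > 0" "\<forall>i<n. \<forall>j<n. i \<noteq> j \<longrightarrow> M i j \<le> 0"
    "\<forall>j<n. (\<Sum>i<n. q i * M i j) > 0" "\<forall>i<n. b i \<ge> 0"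
  shows "\<exists>\<rho>. (\<forall>i<n. \<rho> i \<ge> 0) \<and> (\<forall>i<n. (\<Sum>j<n. M i j * \<rho> j) = b i)"
  using assms
proof (induction n arbitrary: M b)
  case 0
  then show ?case by auto
next
  case (Suc n)
  note q = Suc.prems(1) and Z = Suc.prems(2) and col = Suc.prems(3) and bpos = Suc.prems(4)
  define m where "m = M n n"
  have qge: "\<forall>i<Suc n. q i \<ge> 0" using q by (auto intro: less_imp_le)
  have Sn_le: "(\<Sum>i<n. q i * M i n) \<le> 0"
  proof (rule sum_nonpos)
    fix i assume "i \<in> {..<n}"
    thus "q i * M i n \<le> 0" using qge Z by (intro mult_nonneg_nonpos) auto
  qed
  have coln: "(\<Sum>i<n. q i * M i n) + q n * m > 0"
    using col[rule_format, of n] by (simp add: m_def)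
  have qn: "q n > 0" using q by auto
  have mpos: "m > 0"
  proof -
    have "q n * m > 0" using coln Sn_le by linarith
    thus ?thesis using qn by (simp add: zero_less_mult_iff)
  qed
  define M' where "M' i j = M i j - M i n * M n j / m" for i j
  define b' where "b' i = b i - M i n * b n / m" for i
  have "\<exists>\<rho>. (\<forall>i<n. \<rho> i \<ge> 0) \<and> (\<forall>i<n. (\<Sum>j<n. M' i j * \<rho> j) = b' i)"
  proof (rule Suc.IH)
    show "\<forall>i<n. 0 < q i" using q by auto
    show "\<forall>i<n. \<forall>j<n. i \<noteq> j \<longrightarrow> M' i j \<le> 0"
    proof (intro allI impI)
      fix i j assume ij: "i < n" "j < n" "i \<noteq> j"
      have "M i n * M n j \<ge> 0" using Z ij by (intro mult_nonpos_nonpos) auto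
      hence "M i n * M n j / m \<ge> 0" using mpos by simp
      moreover have "M i j \<le> 0" using Z ij by auto
      ultimately show "M' i j \<le> 0" unfolding M'_def by linarith
    qed
    show "\<forall>i<n. 0 \<le> b' i"
    proof (intro allI impI)
      fix i assume i: "i < n"
      have "M i n * b n \<le> 0" using Z bpos i by (intro mult_nonpos_nonneg) auto
      hence "M i n * b n / m \<le> 0" using mpos by (simp add: divide_nonpos_pos)
      moreover have "b i \<ge> 0" using bpos i by auto
      ultimately show "0 \<le> b' i" unfolding b'_def by linarith
    qed
    show "\<forall>j<n. 0 < (\<Sum>i<n. q i * M' i j)"
    proof (intro allI impI)
      fix j assume j: "j < n"
      have colj: "(\<Sum>i<n. q i * M i j) + q n * M n j > 0"
        using col[rule_format, of j] j by simp
      have Mnj: "M n j \<le> 0" using Z j by auto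
      have eq: "(\<Sum>i<n. q i * M' i j) = (\<Sum>i<n. q i * M i j) - (M n j / m) * (\<Sum>i<n. q i * M i n)"
        unfolding M'_def by (simp add: right_diff_distrib sum_subtractf sum_distrib_left mult_ac)
      have "(\<Sum>i<n. q i * M i n) > - (q n * m)" using coln by linarith
      hence "(- M n j / m) * (\<Sum>i<n. q i * M i n) \<ge> (- M n j / m) * (- (q n * m))"
        using Mnj mpos by (intro mult_left_mono) (auto simp: divide_nonneg_pos divide_nonpos_pos)
      also have "(- M n j / m) * (- (q n * m)) = q n * M n j" using mpos by simp
      finally have "(- M n j / m) * (\<Sum>i<n. q i * M i n) \<ge> q n * M n j" .
      moreover have "(- M n j / m) * (\<Sum>i<n. q i * M i n) = - ((M n j / m) * (\<Sum>i<n. q i * M i n))"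
        by simp
      ultimately show "0 < (\<Sum>i<n. q i * M' i j)" using eq colj by linarith
    qed
  qed
  then obtain \<rho>' where r': "\<forall>i<n. \<rho>' i \<ge> 0" "\<forall>i<n. (\<Sum>j<n. M' i j * \<rho>' j) = b' i" by blast
  define rn where "rn = (b n - (\<Sum>j<n. M n j * \<rho>' j)) / m"
  define \<rho> where "\<rho> j = (if j < n then \<rho>' j else rn)" for j
  have sl: "(\<Sum>j<n. M n j * \<rho>' j) \<le> 0"
    by (rule sum_nonpos) (use Z r' in \<open>auto intro: mult_nonpos_nonneg\<close>)
  have rn: "rn \<ge> 0" unfolding rn_def using sl bpos mpos by auto
  show ?case
  proof (intro exI conjI allI impI)
    fix i assume "i < Suc n" thus "\<rho> i \<ge> 0" using r' rn by (auto simp: \<rho>_def)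
  next
    fix i assume i: "i < Suc n"
    have split: "(\<Sum>j<Suc n. M i j * \<rho> j) = (\<Sum>j<n. M i j * \<rho>' j) + M i n * rn"
      by (simp add: \<rho>_def)
    show "(\<Sum>j<Suc n. M i j * \<rho> j) = b i"
    proof (cases "i = n")
      case True
      then show ?thesis unfolding split rn_def using mpos by (simp add: m_def)
    next
      case False
      hence i': "i < n" using i by auto
      have "(\<Sum>j<n. M' i j * \<rho>' j) = (\<Sum>j<n. M i j * \<rho>' j) - (M i n / m) * (\<Sum>j<n. M n j * \<rho>' j)"
      proof -
        have "(\<Sum>j<n. M' i j * \<rho>' j) = (\<Sum>j<n. M i j * \<rho>' j - (M i n / m) * (M n j * \<rho>' j))"
          unfolding M'_def by (rule sum.cong) (auto simp: algebra_simps)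
        also have "\<dots> = (\<Sum>j<n. M i j * \<rho>' j) - (M i n / m) * (\<Sum>j<n. M n j * \<rho>' j)"
          by (simp add: sum_subtractf sum_distrib_left)
        finally show ?thesis .
      qed
      hence "(\<Sum>j<n. M i j * \<rho>' j) = b' i + (M i n / m) * (\<Sum>j<n. M n j * \<rho>' j)"
        using r'(2) i' by simp
      moreover have "M i n * ((b n - (\<Sum>j<n. M n j * \<rho>' j)) / m) = M i n * b n / m - (M i n / m) * (\<Sum>j<n. M n j * \<rho>' j)"
        by (simp only: diff_divide_distrib right_diff_distrib times_divide_eq_right times_divide_eq_left)
      ultimately show ?thesis unfolding split rn_def b'_def by linarith
    qed
  qed
qed



lemma sq_form:
  fixes x :: "complex vec" and f :: "nat \<Rightarrow> complex"
  shows "(\<Sum>a<n. \<Sum>b<n. cnj (x $ a) * (f a * cnj (f b)) * x $ b)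
       = complex_of_real ((cmod (\<Sum>a<n. cnj (x $ a) * f a))\<^sup>2)"
proof -
  have "(\<Sum>a<n. \<Sum>b<n. cnj (x $ a) * (f a * cnj (f b)) * x $ b)
      = (\<Sum>a<n. cnj (x $ a) * f a) * (\<Sum>b<n. cnj (f b) * x $ b)"
    by (simp add: sum_product mult_ac)
  also have "(\<Sum>b<n. cnj (f b) * x $ b) = cnj (\<Sum>a<n. cnj (x $ a) * f a)"
    by (simp add: mult_ac)
  finally show ?thesis by (simp only: complex_norm_square)
qed

lemma aux_distr:
  fixes c d u v H :: complex
  shows "c * (u * H + v * (\<Sum>j\<in>J. F j)) * d = u * (c * H * d) + v * (\<Sum>j\<in>J. c * F j * d)"
proof -
  have "c * (v * (\<Sum>j\<in>J. F j)) * d = v * ((\<Sum>j\<in>J. F j) * (c * d))" by (simp only: mult_ac)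
  also have "\<dots> = v * (\<Sum>j\<in>J. F j * (c * d))" by (simp only: sum_distrib_right)
  also have "\<dots> = v * (\<Sum>j\<in>J. c * F j * d)" by (simp only: mult_ac)
  finally have "c * (v * (\<Sum>j\<in>J. F j)) * d = v * (\<Sum>j\<in>J. c * F j * d)" .
  moreover have "c * (u * H) * d = u * (c * H * d)" by (simp only: mult_ac)
  ultimately show ?thesis by (simp only: distrib_left distrib_right)
qed

lemma covR_hform:
  "hform Mt (covR Mt L beta h V lam) x = complex_of_real (beta\<^sup>2 * (cmod (\<Sum>a<Mt. cnj (x $ a) * h $ a))\<^sup>2
     + (1 - beta\<^sup>2) * (\<Sum>j<L. lam j * (cmod (\<Sum>a<Mt. cnj (x $ a) * V $$ (a, j)))\<^sup>2))"
proof -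
  have "hform Mt (covR Mt L beta h V lam) x =
     (\<Sum>a<Mt. \<Sum>b<Mt. complex_of_real (beta\<^sup>2) * (cnj (x $ a) * (h $ a * cnj (h $ b)) * x $ b)
        + complex_of_real (1 - beta\<^sup>2) * (\<Sum>j<L. complex_of_real (lam j) *
            (cnj (x $ a) * (V $$ (a, j) * cnj (V $$ (b, j))) * x $ b)))"
    unfolding hform_def covR_def
  proof (intro sum.cong refl)
    fix a b assume "a \<in> {..<Mt}" "b \<in> {..<Mt}"
    hence ab: "a < Mt" "b < Mt" by auto
    have "cnj (x $ a) * mat Mt Mt (\<lambda>(a, b). complex_of_real (beta\<^sup>2) * (h $ a * cnj (h $ b)) +
               complex_of_real (1 - beta\<^sup>2) * (\<Sum>j<L. V $$ (a, j) * complex_of_real (lam j) * cnj (V $$ (b, j)))) $$ (a, b) * x $ b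
      = cnj (x $ a) * (complex_of_real (beta\<^sup>2) * (h $ a * cnj (h $ b)) +
               complex_of_real (1 - beta\<^sup>2) * (\<Sum>j<L. V $$ (a, j) * complex_of_real (lam j) * cnj (V $$ (b, j)))) * x $ b"
      using ab by simp
    also have "\<dots> = complex_of_real (beta\<^sup>2) * (cnj (x $ a) * (h $ a * cnj (h $ b)) * x $ b)
        + complex_of_real (1 - beta\<^sup>2) * (\<Sum>j<L. cnj (x $ a) * (V $$ (a, j) * complex_of_real (lam j) * cnj (V $$ (b, j))) * x $ b)"
      by (rule aux_distr)
    also have "(\<Sum>j<L. cnj (x $ a) * (V $$ (a, j) * complex_of_real (lam j) * cnj (V $$ (b, j))) * x $ b)
       = (\<Sum>j<L. complex_of_real (lam j) * (cnj (x $ a) * (V $$ (a, j) * cnj (V $$ (b, j))) * x $ b))"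
      by (intro sum.cong refl) (simp only: mult_ac)
    finally show "cnj (x $ a) * mat Mt Mt (\<lambda>(a, b). complex_of_real (beta\<^sup>2) * (h $ a * cnj (h $ b)) +
               complex_of_real (1 - beta\<^sup>2) * (\<Sum>j<L. V $$ (a, j) * complex_of_real (lam j) * cnj (V $$ (b, j)))) $$ (a, b) * x $ b
      = complex_of_real (beta\<^sup>2) * (cnj (x $ a) * (h $ a * cnj (h $ b)) * x $ b)
        + complex_of_real (1 - beta\<^sup>2) * (\<Sum>j<L. complex_of_real (lam j) *
            (cnj (x $ a) * (V $$ (a, j) * cnj (V $$ (b, j))) * x $ b))" .
  qed
  also have "\<dots> = complex_of_real (beta\<^sup>2) * (\<Sum>a<Mt. \<Sum>b<Mt. cnj (x $ a) * (h $ a * cnj (h $ b)) * x $ b)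
      + complex_of_real (1 - beta\<^sup>2) * (\<Sum>j<L. complex_of_real (lam j) *
          (\<Sum>a<Mt. \<Sum>b<Mt. cnj (x $ a) * (V $$ (a, j) * cnj (V $$ (b, j))) * x $ b))"
  proof -
    have sw: "(\<Sum>a<Mt. \<Sum>b<Mt. \<Sum>j<L. G a b j) = (\<Sum>j<L. \<Sum>a<Mt. \<Sum>b<Mt. G a b j)" for G :: "nat \<Rightarrow> nat \<Rightarrow> nat \<Rightarrow> complex"
    proof -
      have "(\<Sum>a<Mt. \<Sum>b<Mt. \<Sum>j<L. G a b j) = (\<Sum>a<Mt. \<Sum>j<L. \<Sum>b<Mt. G a b j)"
        by (rule sum.cong[OF refl], rule sum.swap)
      also have "\<dots> = (\<Sum>j<L. \<Sum>a<Mt. \<Sum>b<Mt. G a b j)" by (rule sum.swap)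
      finally show ?thesis .
    qed
    show ?thesis
      by (simp only: sum.distrib sum_distrib_left[symmetric] sw)
  qed
  also have "\<dots> = complex_of_real (beta\<^sup>2 * (cmod (\<Sum>a<Mt. cnj (x $ a) * h $ a))\<^sup>2
     + (1 - beta\<^sup>2) * (\<Sum>j<L. lam j * (cmod (\<Sum>a<Mt. cnj (x $ a) * V $$ (a, j)))\<^sup>2))"
    by (simp only: sq_form of_real_add of_real_mult of_real_sum)
  finally show ?thesis .
qed

lemma covR_carrier: "covR Mt L beta h V lam \<in> carrier_mat Mt Mt"
  unfolding covR_def by simp

lemma hform_mulv:
  assumes "A \<in> carrier_mat n n" "x \<in> carrier_vec n"
  shows "hform n A x = (\<Sum>a<n. cnj (x $ a) * (A *\<^sub>v x) $ a)"
  unfolding hform_def using assms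
  by (intro sum.cong refl) (auto simp: scalar_prod_def sum_distrib_left mult_ac atLeast0LessThan)

lemma vnorm2_real: "vnorm2 n x = complex_of_real (\<Sum>a<n. (cmod (x $ a))\<^sup>2)"
  unfolding vnorm2_def of_real_sum complex_norm_square by (simp add: mult.commute)

lemma vnorm2_pos:
  assumes "x \<in> carrier_vec n" "x \<noteq> 0\<^sub>v n"
  shows "(\<Sum>a<n. (cmod (x $ a))\<^sup>2) > 0"
proof -
  obtain a where a: "a < n" "x $ a \<noteq> 0" using assms by (metis eq_vecI carrier_vecD index_zero_vec)
  have "(\<Sum>a<n. (cmod (x $ a))\<^sup>2) \<ge> (cmod (x $ a))\<^sup>2"
    using a by (intro member_le_sum) auto
  moreover have "(cmod (x $ a))\<^sup>2 > 0" using a by simp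
  ultimately show ?thesis by linarith
qed

lemma mulv_sum:
  assumes "A \<in> carrier_mat n n" "x \<in> carrier_vec n" "a < n"
  shows "(A *\<^sub>v x) $ a = (\<Sum>b<n. A $$ (a, b) * x $ b)"
  using assms by (simp add: scalar_prod_def atLeast0LessThan)

lemma Nmat_mulv:
  assumes "finite J" "\<forall>j\<in>J. A j \<in> carrier_mat n n" "x \<in> carrier_vec n" "a < n"
  shows "(mat n n (\<lambda>(a, b). (if a = b then s else 0) + (\<Sum>j\<in>J. c j * A j $$ (a, b))) *\<^sub>v x) $ a
     = s * x $ a + (\<Sum>j\<in>J. c j * (A j *\<^sub>v x) $ a)"
proof -
  have "(mat n n (\<lambda>(a, b). (if a = b then s else 0) + (\<Sum>j\<in>J. c j * A j $$ (a, b))) *\<^sub>v x) $ a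
      = (\<Sum>b<n. ((if a = b then s else 0) + (\<Sum>j\<in>J. c j * A j $$ (a, b))) * x $ b)"
    using assms(3,4) by (subst mulv_sum[of _ n]) auto
  also have "\<dots> = (\<Sum>b<n. (if a = b then s * x $ b else 0)) + (\<Sum>b<n. \<Sum>j\<in>J. c j * (A j $$ (a, b) * x $ b))"
    by (simp only: sum.distrib[symmetric], rule sum.cong[OF refl])
       (simp add: distrib_right sum_distrib_right mult.assoc)
  also have "(\<Sum>b<n. (if a = b then s * x $ b else 0)) = s * x $ a"
    using assms(4) by simp
  also have "(\<Sum>b<n. \<Sum>j\<in>J. c j * (A j $$ (a, b) * x $ b)) = (\<Sum>j\<in>J. \<Sum>b<n. c j * (A j $$ (a, b) * x $ b))"
    by (rule sum.swap)
  also have "\<dots> = (\<Sum>j\<in>J. c j * (A j *\<^sub>v x) $ a)"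
  proof (rule sum.cong[OF refl])
    fix j assume "j \<in> J"
    thus "(\<Sum>b<n. c j * (A j $$ (a, b) * x $ b)) = c j * (A j *\<^sub>v x) $ a"
      using assms by (simp add: mulv_sum[of _ n] sum_distrib_left)
  qed
  finally show ?thesis .
qed

lemma smat_mulv:
  assumes "A \<in> carrier_mat n n" "x \<in> carrier_vec n" "a < n"
  shows "((c \<cdot>\<^sub>m A) *\<^sub>v x) $ a = c * (A *\<^sub>v x) $ a"
  using assms by (simp add: scalar_prod_def sum_distrib_left mult_ac)


lemma dot_comb:
  assumes x: "x \<in> carrier_vec n" and J: "finite J" and A: "\<forall>j\<in>J. A j \<in> carrier_mat n n"
    and B: "B \<in> carrier_mat n n"
  shows "(\<Sum>a<n. cnj (x $ a) * (s * x $ a + (\<Sum>j\<in>J. c j * (A j *\<^sub>v x) $ a) + d * (B *\<^sub>v x) $ a))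
     = s * vnorm2 n x + (\<Sum>j\<in>J. c j * hform n (A j) x) + d * hform n B x"
proof -
  have "(\<Sum>a<n. cnj (x $ a) * (s * x $ a + (\<Sum>j\<in>J. c j * (A j *\<^sub>v x) $ a) + d * (B *\<^sub>v x) $ a))
     = (\<Sum>a<n. s * (cnj (x $ a) * x $ a) + (\<Sum>j\<in>J. c j * (cnj (x $ a) * (A j *\<^sub>v x) $ a)) + d * (cnj (x $ a) * (B *\<^sub>v x) $ a))"
    by (rule sum.cong[OF refl]) (simp add: distrib_left sum_distrib_left mult.left_commute)
  also have "\<dots> = s * (\<Sum>a<n. cnj (x $ a) * x $ a) + (\<Sum>a<n. \<Sum>j\<in>J. c j * (cnj (x $ a) * (A j *\<^sub>v x) $ a)) + d * (\<Sum>a<n. cnj (x $ a) * (B *\<^sub>v x) $ a)"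
    by (simp only: sum.distrib sum_distrib_left)
  also have "(\<Sum>a<n. \<Sum>j\<in>J. c j * (cnj (x $ a) * (A j *\<^sub>v x) $ a)) = (\<Sum>j\<in>J. \<Sum>a<n. c j * (cnj (x $ a) * (A j *\<^sub>v x) $ a))"
    by (rule sum.swap)
  also have "\<dots> = (\<Sum>j\<in>J. c j * hform n (A j) x)"
  proof (rule sum.cong[OF refl])
    fix j assume "j \<in> J"
    thus "(\<Sum>a<n. c j * (cnj (x $ a) * (A j *\<^sub>v x) $ a)) = c j * hform n (A j) x"
      using A x by (simp add: hform_mulv sum_distrib_left)
  qed
  finally show ?thesis using B x by (simp add: hform_mulv vnorm2_def)
qed

lemma hform_smult:
  assumes "x \<in> carrier_vec n"
  shows "hform n A (c \<cdot>\<^sub>v x) = (cnj c * c) * hform n A x"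
  unfolding hform_def using assms
  by (simp add: sum_distrib_left mult_ac)

lemma vnorm2_smult:
  assumes "x \<in> carrier_vec n"
  shows "vnorm2 n (c \<cdot>\<^sub>v x) = (cnj c * c) * vnorm2 n x"
  unfolding vnorm2_def using assms
  by (simp add: sum_distrib_left mult_ac)

lemma sum_swap_offdiag:
  fixes K :: nat and F :: "nat \<Rightarrow> nat \<Rightarrow> 'a::comm_monoid_add"
  shows "(\<Sum>i<K. \<Sum>j\<in>{0..<K} - {i}. F i j) = (\<Sum>j<K. \<Sum>i\<in>{0..<K} - {j}. F i j)"
proof -
  have L: "(\<Sum>i<K. \<Sum>j\<in>{0..<K} - {i}. F i j) = (\<Sum>i<K. \<Sum>j\<in>{j \<in> {..<K}. i \<noteq> j}. F i j)"
    by (rule sum.cong[OF refl], rule sum.cong) auto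
  have R: "(\<Sum>j<K. \<Sum>i\<in>{0..<K} - {j}. F i j) = (\<Sum>j<K. \<Sum>i\<in>{i \<in> {..<K}. i \<noteq> j}. F i j)"
    by (rule sum.cong[OF refl], rule sum.cong) auto
  show ?thesis unfolding L R by (rule sum.swap_restrict) auto
qed

lemma sum_split_diag:
  fixes K j :: nat and F :: "nat \<Rightarrow> 'a::comm_monoid_add"
  assumes "j < K"
  shows "(\<Sum>i<K. F i) = F j + (\<Sum>i\<in>{0..<K} - {j}. F i)"
proof -
  have "(\<Sum>i<K. F i) = (\<Sum>i\<in>{0..<K}. F i)" by (simp add: lessThan_atLeast0)
  also have "\<dots> = F j + (\<Sum>i\<in>{0..<K} - {j}. F i)" using assms by (intro sum.remove) auto
  finally show ?thesis .
qed



theorem theorem1: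
  fixes Mt N K :: nat and sigma2 :: real
    and hbar :: "nat \<Rightarrow> complex vec" and beta :: "nat \<Rightarrow> real"
    and V :: "complex mat" and lam :: "nat \<Rightarrow> nat \<Rightarrow> real"
    and R :: "nat \<Rightarrow> complex mat"
    and gamma :: "nat \<Rightarrow> real" and p :: "nat \<Rightarrow> complex vec" and mu :: "nat \<Rightarrow> real"
    and rho :: "nat \<Rightarrow> real" and pu :: "nat \<Rightarrow> complex vec"
    and S Nm :: "nat \<Rightarrow> complex mat" and k :: nat
  assumes sigma: "sigma2 > 0"
    and V: "V \<in> carrier_mat Mt (N * Mt)"
    and hbar: "\<forall>i<K. hbar i \<in> carrier_vec Mt"
    and beta: "\<forall>i<K. 0 \<le> beta i \<and> beta i \<le> 1"
    and lam: "\<forall>i<K. \<forall>j<N * Mt. 0 \<le> lam i j"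
    and R_def: "\<forall>i<K. R i = covR Mt (N * Mt) (beta i) (hbar i) V (lam i)"
    and gamma: "\<forall>i<K. gamma i > 0"
    and opt: "optimalP3 Mt K sigma2 R gamma p"
    and mu_nonneg: "\<forall>i<K. mu i \<ge> 0"
    and stationarity: "\<forall>i<K. vec Mt (\<lambda>a. p i $ a
            + (\<Sum>j\<in>{0..<K} - {i}. complex_of_real (mu j / sigma2) * (R j *\<^sub>v p i) $ a)
            - complex_of_real (mu i / (sigma2 * gamma i)) * (R i *\<^sub>v p i) $ a) = 0\<^sub>v Mt"
    and slackness: "\<forall>i<K. mu i * Ck Mt K sigma2 R gamma p i = 0"
    and decomp: "\<forall>i<K. rho i \<ge> 0 \<and> pu i \<in> carrier_vec Mt \<and> vnorm2 Mt (pu i) = 1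
                     \<and> p i = complex_of_real (sqrt (rho i)) \<cdot>\<^sub>v pu i"
    and S_def: "\<forall>i<K. S i = complex_of_real (mu i) \<cdot>\<^sub>m R i"
    and N_def: "\<forall>i<K. Nm i = mat Mt Mt (\<lambda>(a, b). (if a = b then complex_of_real sigma2 else 0)
            + (\<Sum>j\<in>{0..<K} - {i}. complex_of_real (mu j) * R j $$ (a, b)))"
    and k: "k < K"
  shows "max_gen_eigenvector Mt (S k) (Nm k) (pu k)
         \<and> max_gen_eigenvalue Mt (S k) (Nm k) (complex_of_real (gamma k))"
proof -
  define J where "J i = {0..<K} - {i}" for i :: nat
  have finJ: "finite (J i)" for i by (simp add: J_def)
  have JK: "j < K" if "j \<in> J i" for i j using that by (simp add: J_def)
  have Rc: "R i \<in> carrier_mat Mt Mt" if "i < K" for i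
    using R_def that covR_carrier by metis
  define g where "g i x = Re (hform Mt (R i) x)" for i x
  define nv where "nv x = (\<Sum>a<Mt. (cmod (x $ a))\<^sup>2)" for x :: "complex vec"
  have vn: "vnorm2 Mt x = complex_of_real (nv x)" for x
    unfolding nv_def by (rule vnorm2_real)
  have nv_nonneg: "nv x \<ge> 0" for x unfolding nv_def by (intro sum_nonneg) auto
  have hR: "hform Mt (R i) x = complex_of_real (g i x) \<and> g i x \<ge> 0" if i: "i < K" for i x
  proof -
    have b: "0 \<le> (beta i)\<^sup>2" "(beta i)\<^sup>2 \<le> 1" using beta i by (auto simp: power_le_one)
    define E where "E = (beta i)\<^sup>2 * (cmod (\<Sum>a<Mt. cnj (x $ a) * hbar i $ a))\<^sup>2
     + (1 - (beta i)\<^sup>2) * (\<Sum>j<N * Mt. lam i j * (cmod (\<Sum>a<Mt. cnj (x $ a) * V $$ (a, j)))\<^sup>2)"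
    have H: "hform Mt (R i) x = complex_of_real E" unfolding E_def using R_def i covR_hform by simp
    have "E \<ge> 0" unfolding E_def using b lam i
      by (intro add_nonneg_nonneg mult_nonneg_nonneg sum_nonneg) auto
    thus ?thesis using H by (simp add: g_def)
  qed
  have Ckf: "Ck Mt K sigma2 R gamma v i = 1 + (1 / sigma2) * (\<Sum>j\<in>J i. g i (v j)) - (1 / (sigma2 * gamma i)) * g i (v i)" for v i
    by (simp add: Ck_def J_def g_def)
  have feas: "\<forall>i<K. p i \<in> carrier_vec Mt \<and> Ck Mt K sigma2 R gamma p i \<le> 0"
    using opt by (simp add: optimalP3_def feasibleP3_def)
  have pc: "p i \<in> carrier_vec Mt" if "i < K" for i using feas that by auto
  have gpos: "g i (p i) \<ge> sigma2 * gamma i" if i: "i < K" for i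
  proof -
    have S0: "(\<Sum>j\<in>J i. g i (p j)) \<ge> 0" using hR i by (intro sum_nonneg) auto
    have "Ck Mt K sigma2 R gamma p i \<le> 0" using feas i by auto
    hence "1 + (1 / sigma2) * (\<Sum>j\<in>J i. g i (p j)) - (1 / (sigma2 * gamma i)) * g i (p i) \<le> 0"
      using Ckf by simp
    moreover have "(1 / sigma2) * (\<Sum>j\<in>J i. g i (p j)) \<ge> 0" using S0 sigma by simp
    ultimately have "(1 / (sigma2 * gamma i)) * g i (p i) \<ge> 1" by linarith
    hence "(sigma2 * gamma i) * ((1 / (sigma2 * gamma i)) * g i (p i)) \<ge> (sigma2 * gamma i) * 1"
      using sigma gamma i by (intro mult_left_mono) auto
    moreover have "gamma i > 0" using gamma i by auto
    ultimately show ?thesis using sigma by simp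
  qed
  have pnz: "p i \<noteq> 0\<^sub>v Mt" if i: "i < K" for i
  proof
    assume "p i = 0\<^sub>v Mt"
    hence "hform Mt (R i) (p i) = 0" by (simp add: hform_def)
    hence "g i (p i) = 0" by (simp add: g_def)
    thus False using gpos[OF i] sigma gamma i by (simp add: zero_less_mult_iff) (smt (verit) mult_pos_pos)
  qed
  have nvpos: "nv (p i) > 0" if i: "i < K" for i
    unfolding nv_def using vnorm2_pos pc[OF i] pnz[OF i] by blast
  have stc: "p i $ a + (\<Sum>j\<in>J i. complex_of_real (mu j / sigma2) * (R j *\<^sub>v p i) $ a)
            - complex_of_real (mu i / (sigma2 * gamma i)) * (R i *\<^sub>v p i) $ a = 0"
    if i: "i < K" and a: "a < Mt" for i a
  proof -
    have "vec Mt (\<lambda>a. p i $ a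
            + (\<Sum>j\<in>{0..<K} - {i}. complex_of_real (mu j / sigma2) * (R j *\<^sub>v p i) $ a)
            - complex_of_real (mu i / (sigma2 * gamma i)) * (R i *\<^sub>v p i) $ a) $ a = 0\<^sub>v Mt $ a"
      using stationarity i by simp
    thus ?thesis using a by (simp add: J_def)
  qed
  have Sd: "nv (p i) + (\<Sum>j\<in>J i. (mu j / sigma2) * g j (p i)) - (mu i / (sigma2 * gamma i)) * g i (p i) = 0"
    if i: "i < K" for i
  proof -
    have "(\<Sum>a<Mt. cnj (p i $ a) * (1 * p i $ a + (\<Sum>j\<in>J i. complex_of_real (mu j / sigma2) * (R j *\<^sub>v p i) $ a)
        + (- complex_of_real (mu i / (sigma2 * gamma i))) * (R i *\<^sub>v p i) $ a))
      = 1 * vnorm2 Mt (p i) + (\<Sum>j\<in>J i. complex_of_real (mu j / sigma2) * hform Mt (R j) (p i))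
        + (- complex_of_real (mu i / (sigma2 * gamma i))) * hform Mt (R i) (p i)"
      using pc[OF i] finJ Rc JK Rc[OF i] by (intro dot_comb) auto
    moreover have "(\<Sum>a<Mt. cnj (p i $ a) * (1 * p i $ a + (\<Sum>j\<in>J i. complex_of_real (mu j / sigma2) * (R j *\<^sub>v p i) $ a)
        + (- complex_of_real (mu i / (sigma2 * gamma i))) * (R i *\<^sub>v p i) $ a)) = 0"
      using stc[OF i] by (intro sum.neutral) simp
    moreover have "(\<Sum>j\<in>J i. complex_of_real (mu j / sigma2) * hform Mt (R j) (p i))
        = complex_of_real (\<Sum>j\<in>J i. (mu j / sigma2) * g j (p i))"
      unfolding of_real_sum using hR JK by (intro sum.cong refl) auto
    ultimately have "complex_of_real (nv (p i) + (\<Sum>j\<in>J i. (mu j / sigma2) * g j (p i)) - (mu i / (sigma2 * gamma i)) * g i (p i)) = 0"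
      using hR[OF i] vn by simp
    thus ?thesis by (simp only: of_real_eq_0_iff)
  qed
  have mupos: "mu i > 0" if i: "i < K" for i
  proof (rule ccontr)
    assume "\<not> mu i > 0"
    hence "mu i = 0" using mu_nonneg i by force
    moreover have "(\<Sum>j\<in>J i. (mu j / sigma2) * g j (p i)) \<ge> 0"
      using hR JK mu_nonneg sigma by (intro sum_nonneg mult_nonneg_nonneg) auto
    ultimately show False using Sd[OF i] nvpos[OF i] by simp
  qed
  have gamma_pos: "gamma i > 0" if "i < K" for i using gamma that by auto
  have objp: "objP3 Mt K p = (\<Sum>i<K. mu i)"
  proof -
    define aa where "aa i = (mu i / (sigma2 * gamma i)) * g i (p i)" for i
    define F where "F i j = (mu j / sigma2) * g j (p i)" for i j
    have nvE: "nv (p i) = aa i - (\<Sum>j\<in>J i. F i j)" if i: "i < K" for i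
      using Sd[OF i] unfolding aa_def F_def by linarith
    have muE: "mu i = aa i - (\<Sum>j\<in>J i. F j i)" if i: "i < K" for i
    proof -
      have sl: "mu i * (1 + (1 / sigma2) * (\<Sum>j\<in>J i. g i (p j)) - (1 / (sigma2 * gamma i)) * g i (p i)) = 0"
        using slackness i Ckf by simp
      have "(\<Sum>j\<in>J i. F j i) = (mu i / sigma2) * (\<Sum>j\<in>J i. g i (p j))"
        unfolding F_def by (simp add: sum_distrib_left)
      moreover have "mu i * (1 + (1 / sigma2) * (\<Sum>j\<in>J i. g i (p j)) - (1 / (sigma2 * gamma i)) * g i (p i))
          = mu i + (mu i / sigma2) * (\<Sum>j\<in>J i. g i (p j)) - aa i"
        unfolding aa_def by (simp add: algebra_simps)
      ultimately show ?thesis using sl by linarith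
    qed
    have "objP3 Mt K p = (\<Sum>i<K. nv (p i))"
      unfolding objP3_def vn by simp
    also have "\<dots> = (\<Sum>i<K. aa i) - (\<Sum>i<K. \<Sum>j\<in>J i. F i j)"
      using nvE by (simp add: sum_subtractf)
    also have "(\<Sum>i<K. \<Sum>j\<in>J i. F i j) = (\<Sum>i<K. \<Sum>j\<in>J i. F j i)"
      unfolding J_def by (rule sum_swap_offdiag)
    also have "(\<Sum>i<K. aa i) - (\<Sum>i<K. \<Sum>j\<in>J i. F j i) = (\<Sum>i<K. mu i)"
      using muE by (simp add: sum_subtractf)
    finally show ?thesis .
  qed
  have Sc: "S i \<in> carrier_mat Mt Mt" if i: "i < K" for i using S_def Rc[OF i] i by simp
  have Nc: "Nm i \<in> carrier_mat Mt Mt" if i: "i < K" for i using N_def i by simp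
  have Smv: "(S i *\<^sub>v x) $ a = complex_of_real (mu i) * (R i *\<^sub>v x) $ a"
    if i: "i < K" and x: "x \<in> carrier_vec Mt" and a: "a < Mt" for i x a
    using S_def i smat_mulv[OF Rc[OF i] x a] by simp
  have Nmv: "(Nm i *\<^sub>v x) $ a = complex_of_real sigma2 * x $ a + (\<Sum>j\<in>J i. complex_of_real (mu j) * (R j *\<^sub>v x) $ a)"
    if i: "i < K" and x: "x \<in> carrier_vec Mt" and a: "a < Mt" for i x a
  proof -
    have "(Nm i *\<^sub>v x) $ a = (mat Mt Mt (\<lambda>(a, b). (if a = b then complex_of_real sigma2 else 0)
            + (\<Sum>j\<in>J i. complex_of_real (mu j) * R j $$ (a, b))) *\<^sub>v x) $ a"
      using N_def i by (simp add: J_def)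
    also have "\<dots> = complex_of_real sigma2 * x $ a + (\<Sum>j\<in>J i. complex_of_real (mu j) * (R j *\<^sub>v x) $ a)"
      using finJ Rc JK x a by (intro Nmat_mulv) auto
    finally show ?thesis .
  qed
  have hS: "hform Mt (S i) x = complex_of_real (mu i * g i x)"
    if i: "i < K" and x: "x \<in> carrier_vec Mt" for i x
  proof -
    have "hform Mt (S i) x = (\<Sum>a<Mt. cnj (x $ a) * (0 * x $ a + (\<Sum>j\<in>{}. 0 * (R j *\<^sub>v x) $ a) + complex_of_real (mu i) * (R i *\<^sub>v x) $ a))"
      using hform_mulv[OF Sc[OF i] x] Smv[OF i x] by simp
    also have "\<dots> = 0 * vnorm2 Mt x + (\<Sum>j\<in>{}. 0 * hform Mt (R j) x) + complex_of_real (mu i) * hform Mt (R i) x"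
      using x Rc[OF i] by (intro dot_comb) auto
    finally show ?thesis using hR[OF i] by simp
  qed
  have hN: "hform Mt (Nm i) x = complex_of_real (sigma2 * nv x + (\<Sum>j\<in>J i. mu j * g j x))"
    if i: "i < K" and x: "x \<in> carrier_vec Mt" for i x
  proof -
    have "hform Mt (Nm i) x = (\<Sum>a<Mt. cnj (x $ a) * (complex_of_real sigma2 * x $ a + (\<Sum>j\<in>J i. complex_of_real (mu j) * (R j *\<^sub>v x) $ a) + 0 * (R i *\<^sub>v x) $ a))"
      using hform_mulv[OF Nc[OF i] x] Nmv[OF i x] by simp
    also have "\<dots> = complex_of_real sigma2 * vnorm2 Mt x + (\<Sum>j\<in>J i. complex_of_real (mu j) * hform Mt (R j) x) + 0 * hform Mt (R i) x"
      using x Rc[OF i] finJ Rc JK by (intro dot_comb) auto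
    also have "(\<Sum>j\<in>J i. complex_of_real (mu j) * hform Mt (R j) x) = complex_of_real (\<Sum>j\<in>J i. mu j * g j x)"
      unfolding of_real_sum using hR JK by (intro sum.cong refl) auto
    finally show ?thesis using vn by simp
  qed
  have eigp: "S k *\<^sub>v p k = complex_of_real (gamma k) \<cdot>\<^sub>v (Nm k *\<^sub>v p k)"
  proof (rule eq_vecI)
    show "dim_vec (S k *\<^sub>v p k) = dim_vec (complex_of_real (gamma k) \<cdot>\<^sub>v (Nm k *\<^sub>v p k))"
      using Sc[OF k] Nc[OF k] by simp
    fix a assume "a < dim_vec (complex_of_real (gamma k) \<cdot>\<^sub>v (Nm k *\<^sub>v p k))"
    hence a: "a < Mt" using Nc[OF k] by simp
    define T where "T = (\<Sum>j\<in>J k. complex_of_real (mu j) * (R j *\<^sub>v p k) $ a)"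
    have T': "(\<Sum>j\<in>J k. complex_of_real (mu j / sigma2) * (R j *\<^sub>v p k) $ a) = T / complex_of_real sigma2"
      unfolding T_def by (simp add: sum_divide_distrib)
    have st: "p k $ a + T / complex_of_real sigma2 - complex_of_real (mu k / (sigma2 * gamma k)) * (R k *\<^sub>v p k) $ a = 0"
      using stc[OF k a] T' by simp
    have s0: "complex_of_real sigma2 \<noteq> 0" using sigma by simp
    have g0: "complex_of_real (gamma k) \<noteq> 0" using gamma_pos[OF k] by simp
    define W where "W = complex_of_real (mu k) * (R k *\<^sub>v p k) $ a"
    define cs where "cs = complex_of_real sigma2"
    define cg where "cg = complex_of_real (gamma k)"
    have st': "p k $ a + T / cs - W / (cs * cg) = 0"
      using st unfolding W_def cs_def cg_def by simp
    have "cs * cg * (p k $ a + T / cs - W / (cs * cg)) = cs * cg * p k $ a + cg * T - W"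
      using s0 g0 unfolding cs_def cg_def by (simp add: field_simps)
    hence "cs * cg * p k $ a + cg * T - W = 0" using st' by simp
    hence "W = cg * (cs * p k $ a + T)" by (simp add: algebra_simps)
    hence "complex_of_real (mu k) * (R k *\<^sub>v p k) $ a = complex_of_real (gamma k) * (complex_of_real sigma2 * p k $ a + T)"
      unfolding W_def cs_def cg_def .
    thus "(S k *\<^sub>v p k) $ a = (complex_of_real (gamma k) \<cdot>\<^sub>v (Nm k *\<^sub>v p k)) $ a"
      using Smv[OF k pc[OF k] a] Nmv[OF k pc[OF k] a] Nc[OF k] a by (simp add: T_def)
  qed
  obtain rk: "rho k \<ge> 0" and puc: "pu k \<in> carrier_vec Mt" and pdec: "p k = complex_of_real (sqrt (rho k)) \<cdot>\<^sub>v pu k"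
    using decomp k by blast
  define c where "c = complex_of_real (sqrt (rho k))"
  have c0: "c \<noteq> 0"
  proof
    assume "c = 0"
    hence "p k = 0\<^sub>v Mt" using pdec puc by (auto simp: c_def)
    thus False using pnz[OF k] by simp
  qed
  have punz: "pu k \<noteq> 0\<^sub>v Mt"
  proof
    assume "pu k = 0\<^sub>v Mt"
    hence "p k = 0\<^sub>v Mt" using pdec by auto
    thus False using pnz[OF k] by simp
  qed
  have eigpu: "S k *\<^sub>v pu k = complex_of_real (gamma k) \<cdot>\<^sub>v (Nm k *\<^sub>v pu k)"
  proof (rule eq_vecI)
    show "dim_vec (S k *\<^sub>v pu k) = dim_vec (complex_of_real (gamma k) \<cdot>\<^sub>v (Nm k *\<^sub>v pu k))"
      using Sc[OF k] Nc[OF k] by simp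
    fix a assume "a < dim_vec (complex_of_real (gamma k) \<cdot>\<^sub>v (Nm k *\<^sub>v pu k))"
    hence a: "a < Mt" using Nc[OF k] by simp
    have "S k *\<^sub>v p k = c \<cdot>\<^sub>v (S k *\<^sub>v pu k)" "Nm k *\<^sub>v p k = c \<cdot>\<^sub>v (Nm k *\<^sub>v pu k)"
      using pdec mult_mat_vec[OF Sc[OF k] puc] mult_mat_vec[OF Nc[OF k] puc] by (simp_all add: c_def)
    hence "(c \<cdot>\<^sub>v (S k *\<^sub>v pu k)) $ a = (complex_of_real (gamma k) \<cdot>\<^sub>v (c \<cdot>\<^sub>v (Nm k *\<^sub>v pu k))) $ a"
      using eigp by simp
    hence "c * (S k *\<^sub>v pu k) $ a = c * (complex_of_real (gamma k) * (Nm k *\<^sub>v pu k) $ a)"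
      using a Sc[OF k] Nc[OF k] by (simp add: mult.left_commute)
    thus "(S k *\<^sub>v pu k) $ a = (complex_of_real (gamma k) \<cdot>\<^sub>v (Nm k *\<^sub>v pu k)) $ a"
      using c0 a Nc[OF k] by simp
  qed
  have gev: "gen_eigenvalue Mt (S k) (Nm k) (complex_of_real (gamma k))"
    unfolding gen_eigenvalue_def using puc punz eigpu by blast
  have maxev: "l \<le> complex_of_real (gamma k)" if gl: "gen_eigenvalue Mt (S k) (Nm k) l" for l
  proof -
    obtain x where x: "x \<in> carrier_vec Mt" "x \<noteq> 0\<^sub>v Mt" and ev: "S k *\<^sub>v x = l \<cdot>\<^sub>v (Nm k *\<^sub>v x)"
      using gl unfolding gen_eigenvalue_def by blast
    define D where "D = sigma2 * nv x + (\<Sum>j\<in>J k. mu j * g j x)"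
    have nvx: "nv x > 0" unfolding nv_def using vnorm2_pos x by blast
    have "(\<Sum>j\<in>J k. mu j * g j x) \<ge> 0"
      using hR JK mu_nonneg by (intro sum_nonneg mult_nonneg_nonneg) auto
    hence Dpos: "D > 0" unfolding D_def using nvx sigma by (simp add: add_pos_nonneg)
    have "hform Mt (S k) x = (\<Sum>a<Mt. cnj (x $ a) * (l * (Nm k *\<^sub>v x) $ a))"
      using hform_mulv[OF Sc[OF k] x(1)] ev Nc[OF k] by simp
    also have "\<dots> = l * hform Mt (Nm k) x"
      using hform_mulv[OF Nc[OF k] x(1)] by (simp add: sum_distrib_left mult_ac)
    finally have "complex_of_real (mu k * g k x) = l * complex_of_real D"
      using hS[OF k x(1)] hN[OF k x(1)] by (simp add: D_def)
    hence lD: "l = complex_of_real (mu k * g k x / D)" using Dpos by (simp add: field_simps)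
    have "mu k * g k x \<le> gamma k * D"
    proof (rule ccontr)
      assume "\<not> mu k * g k x \<le> gamma k * D"
      hence big: "mu k * g k x > gamma k * D" by simp
      define w where "w i = (if i = k then x else p i)" for i
      have wc: "w i \<in> carrier_vec Mt" if "i < K" for i using pc that x(1) by (simp add: w_def)
      have nvw: "nv (w i) > 0" if "i < K" for i using nvpos that nvx by (simp add: w_def)
      define G where "G i j = g i (w j)" for i j
      have Gnn: "G i j \<ge> 0" if "i < K" for i j using hR that by (simp add: G_def)
      define Mm where "Mm i j = (if i = j then G i i / gamma i else - G i j)" for i j
      have colv: "(\<Sum>i<K. mu i * Mm i j) = mu j * G j j / gamma j - (\<Sum>i\<in>J j. mu i * G i j)"
        if j: "j < K" for j
      proof -
        have "(\<Sum>i<K. mu i * Mm i j) = mu j * Mm j j + (\<Sum>i\<in>J j. mu i * Mm i j)"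
          unfolding J_def by (rule sum_split_diag[OF j])
        also have "(\<Sum>i\<in>J j. mu i * Mm i j) = - (\<Sum>i\<in>J j. mu i * G i j)"
          unfolding sum_negf[symmetric] by (rule sum.cong) (auto simp: Mm_def J_def)
        finally show ?thesis by (simp add: Mm_def)
      qed
      have colge: "(\<Sum>i<K. mu i * Mm i j) \<ge> sigma2 * nv (w j)" if j: "j < K" for j
      proof (cases "j = k")
        case True
        have "gamma k * (sigma2 * nv x + (\<Sum>j\<in>J k. mu j * g j x)) < mu k * g k x" using big by (simp add: D_def)
        hence "sigma2 * nv x + (\<Sum>j\<in>J k. mu j * g j x) < mu k * g k x / gamma k"
          using gamma_pos[OF k] by (simp add: less_divide_eq mult.commute)
        thus ?thesis using True colv[OF j] by (simp add: G_def w_def)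
      next
        case False
        have e1: "sigma2 * (\<Sum>i\<in>J j. (mu i / sigma2) * g i (p j)) = (\<Sum>i\<in>J j. mu i * g i (p j))"
          unfolding sum_distrib_left using sigma by (intro sum.cong refl) simp
        have e2: "sigma2 * ((mu j / (sigma2 * gamma j)) * g j (p j)) = mu j * g j (p j) / gamma j"
          using sigma by simp
        have "sigma2 * (nv (p j) + (\<Sum>i\<in>J j. (mu i / sigma2) * g i (p j)) - (mu j / (sigma2 * gamma j)) * g j (p j)) = 0"
          using Sd[OF j] by simp
        hence "sigma2 * nv (p j) + sigma2 * (\<Sum>i\<in>J j. (mu i / sigma2) * g i (p j)) - sigma2 * ((mu j / (sigma2 * gamma j)) * g j (p j)) = 0"
          by (simp only: right_diff_distrib distrib_left)
        hence "sigma2 * nv (p j) = mu j * g j (p j) / gamma j - (\<Sum>i\<in>J j. mu i * g i (p j))"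
          unfolding e1 e2 by linarith
        thus ?thesis using False colv[OF j] by (simp add: G_def w_def)
      qed
      have colk: "(\<Sum>i<K. mu i * Mm i k) > sigma2 * nv (w k)"
      proof -
        have "gamma k * (sigma2 * nv x + (\<Sum>j\<in>J k. mu j * g j x)) < mu k * g k x" using big by (simp add: D_def)
        hence "sigma2 * nv x + (\<Sum>j\<in>J k. mu j * g j x) < mu k * g k x / gamma k"
          using gamma_pos[OF k] by (simp add: less_divide_eq mult.commute)
        thus ?thesis using colv[OF k] by (simp add: G_def w_def)
      qed
      have "\<exists>\<rho>. (\<forall>i<K. \<rho> i \<ge> 0) \<and> (\<forall>i<K. (\<Sum>j<K. Mm i j * \<rho> j) = sigma2)"
      proof (rule zmat_solve)
        show "\<forall>i<K. 0 < mu i" using mupos by auto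
        show "\<forall>i<K. \<forall>j<K. i \<noteq> j \<longrightarrow> Mm i j \<le> 0" using Gnn by (simp add: Mm_def)
        show "\<forall>j<K. 0 < (\<Sum>i<K. mu i * Mm i j)"
        proof (intro allI impI)
          fix j assume j: "j < K"
          have "sigma2 * nv (w j) > 0" using sigma nvw[OF j] by simp
          thus "0 < (\<Sum>i<K. mu i * Mm i j)" using colge[OF j] by linarith
        qed
        show "\<forall>i<K. 0 \<le> sigma2" using sigma by simp
      qed
      then obtain r where r0: "\<forall>i<K. r i \<ge> 0" and rrow: "\<forall>i<K. (\<Sum>j<K. Mm i j * r j) = sigma2" by blast
      have rowv: "G i i / gamma i * r i - (\<Sum>j\<in>J i. G i j * r j) = sigma2" if i: "i < K" for i
      proof -
        have "(\<Sum>j<K. Mm i j * r j) = Mm i i * r i + (\<Sum>j\<in>J i. Mm i j * r j)"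
          unfolding J_def by (rule sum_split_diag[OF i])
        also have "(\<Sum>j\<in>J i. Mm i j * r j) = - (\<Sum>j\<in>J i. G i j * r j)"
          unfolding sum_negf[symmetric] by (rule sum.cong) (auto simp: Mm_def J_def)
        finally show ?thesis using rrow i by (simp add: Mm_def)
      qed
      define qv where "qv i = complex_of_real (sqrt (r i)) \<cdot>\<^sub>v w i" for i
      have ccr: "cnj (complex_of_real (sqrt (r i))) * complex_of_real (sqrt (r i)) = complex_of_real (r i)"
        if i: "i < K" for i
      proof -
        have "sqrt (r i) * sqrt (r i) = r i" using r0 i by simp
        thus ?thesis by (metis complex_cnj_complex_of_real of_real_mult)
      qed
      have hq: "g i (qv j) = r j * G i j" if i: "i < K" and j: "j < K" for i j
      proof -
        have "hform Mt (R i) (qv j) = complex_of_real (r j) * complex_of_real (g i (w j))"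
          unfolding qv_def hform_smult[OF wc[OF j]] ccr[OF j] using hR[OF i] by simp
        thus ?thesis unfolding g_def[of i "qv j"] G_def by simp
      qed
      have nq: "nv (qv j) = r j * nv (w j)" if j: "j < K" for j
      proof -
        have "complex_of_real (nv (qv j)) = complex_of_real (r j * nv (w j))"
          unfolding vn[symmetric] qv_def vnorm2_smult[OF wc[OF j]] ccr[OF j] by (simp add: vn)
        thus ?thesis by (simp only: of_real_eq_iff)
      qed
      have feasq: "feasibleP3 Mt K sigma2 R gamma qv"
        unfolding feasibleP3_def
      proof (intro allI impI conjI)
        fix i assume i: "i < K"
        show "qv i \<in> carrier_vec Mt" using wc[OF i] by (simp add: qv_def)
        have A: "(\<Sum>j\<in>J i. g i (qv j)) = (\<Sum>j\<in>J i. G i j * r j)"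
          using hq i JK by (intro sum.cong refl) (simp add: mult.commute)
        have B: "(1 / (sigma2 * gamma i)) * g i (qv i) = (1 / sigma2) * (G i i / gamma i * r i)"
          using hq[OF i i] by simp
        have "Ck Mt K sigma2 R gamma qv i = 1 - (1 / sigma2) * (G i i / gamma i * r i - (\<Sum>j\<in>J i. G i j * r j))"
          unfolding Ckf A B by (simp add: algebra_simps)
        also have "\<dots> = 0" using rowv[OF i] sigma by simp
        finally show "Ck Mt K sigma2 R gamma qv i \<le> 0" by simp
      qed
      have objq: "objP3 Mt K qv = (\<Sum>j<K. r j * nv (w j))"
        unfolding objP3_def vn using nq by simp
      have rk: "r k > 0"
      proof -
        have "(\<Sum>j\<in>J k. G k j * r j) \<ge> 0" using Gnn r0 JK k by (intro sum_nonneg mult_nonneg_nonneg) auto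
        hence "G k k / gamma k * r k > 0" using rowv[OF k] sigma by linarith
        hence "r k \<noteq> 0" by auto
        thus ?thesis using r0 k by force
      qed
      have "(\<Sum>j<K. r j * (sigma2 * nv (w j))) < (\<Sum>j<K. r j * (\<Sum>i<K. mu i * Mm i j))"
      proof (rule sum_strict_mono_ex1)
        show "finite {..<K}" by simp
        show "\<forall>j\<in>{..<K}. r j * (sigma2 * nv (w j)) \<le> r j * (\<Sum>i<K. mu i * Mm i j)"
          using colge r0 by (auto intro: mult_left_mono)
        show "\<exists>j\<in>{..<K}. r j * (sigma2 * nv (w j)) < r j * (\<Sum>i<K. mu i * Mm i j)"
          using colk rk k by (intro bexI[of _ k]) auto
      qed
      also have "(\<Sum>j<K. r j * (\<Sum>i<K. mu i * Mm i j)) = (\<Sum>i<K. mu i * (\<Sum>j<K. Mm i j * r j))"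
      proof -
        have "(\<Sum>j<K. r j * (\<Sum>i<K. mu i * Mm i j)) = (\<Sum>j<K. \<Sum>i<K. mu i * (Mm i j * r j))"
          by (simp add: sum_distrib_left mult_ac)
        also have "\<dots> = (\<Sum>i<K. \<Sum>j<K. mu i * (Mm i j * r j))" by (rule sum.swap)
        also have "\<dots> = (\<Sum>i<K. mu i * (\<Sum>j<K. Mm i j * r j))" by (simp add: sum_distrib_left)
        finally show ?thesis .
      qed
      also have "\<dots> = (\<Sum>i<K. mu i * sigma2)" using rrow by simp
      finally have "sigma2 * (\<Sum>j<K. r j * nv (w j)) < sigma2 * (\<Sum>i<K. mu i)"
        by (simp add: sum_distrib_left sum_distrib_right mult_ac)
      hence "objP3 Mt K qv < objP3 Mt K p" unfolding objq objp using sigma by simp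
      moreover have "objP3 Mt K p \<le> objP3 Mt K qv" using opt feasq by (simp add: optimalP3_def)
      ultimately show False by simp
    qed
    hence "mu k * g k x / D \<le> gamma k" using Dpos by (simp add: divide_le_eq)
    thus ?thesis unfolding lD by (simp add: less_eq_complex_def)
  qed
  show ?thesis
    unfolding max_gen_eigenvector_def max_gen_eigenvalue_def
    using gev maxev puc punz eigpu by blast
qed

end
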